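(* (Expression Safety.) Let $\Gamma$ be a Bundl context, $e$ a Bundl expression, $\tau$ a type, $\pi,\pi'$ perspectives, $p\in\mathbb{N}$, and $\eta,\sigma,\Sigma$ local, shared and global memories. Suppose that $\Gamma \vdash^{\pi} e : \tau$, that $\Gamma \vdash \eta,\sigma,\Sigma$, that $\pi \vdash p$, and that $\pi' \leq \pi$. Suppose moreover that all array accesses are in bounds: for every subexpression of $e$ of the form $e_1[e_2]$ and all values, if $\eta,\sigma,\Sigma \vdash^{\pi}_{\pi'} e_1 \Downarrow \langle l, n\rangle$ and $\eta,\sigma,\Sigma \vdash^{\pi}_{\pi'} e_2 \Downarrow i$, then $0 \le i < n$. Then there exists a value $v$ such that $\eta,\sigma,\Sigma \vdash^{\pi}_{\pi'} e \Downarrow v$ and $\eta,\sigma,\Sigma \vdash v : \tau$.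
   Context: Bundl is a core calculus parameterized by fixed positive integers $T$ (threads per block) and $B$ (blocks per grid). Levels and perspectives. Hierarchy levels are $h \in \{\mathrm{Thread},\mathrm{Block},\mathrm{Grid}\}$ with $\mathrm{Thread}\le\mathrm{Block}\le\mathrm{Grid}$. Memory kinds are $l\in\{\mathrm{Local},\mathrm{Shared},\mathrm{Global}\}$. A perspective is a pair $\pi=(h,n)$ with $h$ a level and $n\in\mathbb{N}$. Order: $(h_1,n_1)\le(h_2,n_2)$ iff $n_1$ divides $n_2$ and $h_1\le h_2$; $\pi<\pi''$ means $\pi\le\pi''$ and $\pi\neq\pi''$. Level ratios: $\mathrm{Grid}/\mathrm{Block}=B$, $\mathrm{Block}/\mathrm{Thread}=T$ (with $h/h=1$ and $\mathrm{Grid}/\mathrm{Thread}=BT$), and perspective division is $(h_1,n_1)/(h_2,n_2)=((h_1/h_2)\cdot n_1)/n_2$. For $\pi=(h,n)$ and $p\in\mathbb{N}$, $\pi\vdash p$ means $p<n$. Types and contexts. Base types $\beta ::= \mathrm{bool}\mid\mathrm{int}\mid\mathrm{float}$; types $\tau ::= \beta \mid \beta[]^{l} \mid \mathrm{Fun}(\Gamma',\pi,m) \mid \mathrm{async}\ \tau$ (function types carry a parameter context, a perspective and a memory bound). A context $\Gamma$ is a finite list of bindings $x :^{\pi}\tau$ (variable $x$ of type $\tau$ living at perspective $\pi$). Expressions: $e ::= x \mid n \mid f \mid b \mid \mathrm{partition\_id} \mid e_1[e_2] \mid e_1\ \mathrm{bop}\ e_2 \mid e_1\ \mathrm{cmp}\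 e_2$, with integer literals $n$, float literals $f$, boolean literals $b$; $\mathrm{bop}$ ranges over fixed total binary operations $\mathbb{Z}\times\mathbb{Z}\to\mathbb{Z}$ and $\mathrm{cmp}$ over fixed total comparisons $\mathbb{Z}\times\mathbb{Z}\to\{\mathrm{true},\mathrm{false}\}$. Expression typing $\Gamma\vdash^{\pi} e:\tau$ is the least relation closed under: (T-Var) if $x:^{\pi}\tau\in\Gamma$ then $\Gamma\vdash^{\pi}x:\tau$; integer, float and boolean literals have types int, float, bool at every $\pi$; (T-Partition-Id) if $\pi<(\mathrm{Grid},1)$ then $\Gamma\vdash^{\pi}\mathrm{partition\_id}:\mathrm{int}$; (T-Arr-Access) if $\Gamma\vdash^{\pi''}e_1:\tau[]^{l}$, $\Gamma\vdash^{\pi}e_2:\mathrm{int}$, $l\in\{\mathrm{Global},\mathrm{Local}\}$ and $\pi\le\pi''$, then $\Gamma\vdash^{\pi}e_1[e_2]:\tau$; (T-Arr-Access-Shared) if $\Gamma\vdash^{\pi''}e_1:\tau[]^{\mathrm{Shared}}$, $\Gamma\vdash^{\pi}e_2:\mathrm{int}$, $\pi\le(\mathrm{Block},1)$ and $\pi\le\pi''$, then $\Gamma\vdash^{\pi}e_1[e_2]:\tau$; (T-Bop) if $\Gamma\vdash^{\pi}e_1:\mathrm{int}$ and $\Gamma\vdash^{\pi}e_2:\mathrm{int}$ then $\Gamma\vdash^{\pi}e_1\ \mathrm{bop}\ e_2:\mathrm{int}$; (T-Cmp) same premises give $\Gamma\vdash^{\pi}e_1\ \mathrm{cmp}\ e_2:\mathrm{bool}$.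 Memories and values. Values are integers, floats, booleans, array references $\langle x,n\rangle$ (base location $x$, length $n$), and function closures. Local memory $\eta$, shared memory $\sigma$ and global memory $\Sigma$ are finite maps from names to values, each entry annotated with a perspective ($x\mapsto^{\pi}v$); the three have disjoint domains, and names are identified with integer locations so that $x+i$ is a location. $\mathrm{get}(\eta,\sigma,\Sigma,x)$ is the value stored at $x$ in whichever of the three memories contains $x$. Value typing $\eta,\sigma,\Sigma\vdash v:\tau$: integers have type int, booleans bool, floats float; $\langle x,n\rangle$ has type $\beta[]^{l}$ iff $\eta,\sigma,\Sigma\vdash \mathrm{get}(\eta,\sigma,\Sigma,x+i):\beta$ for all $i<n$; a closure has a function type according to a fixed given relation (defined via the typing of the closure's body statement). Environment typing $\Gamma\vdash\eta,\sigma,\Sigma$ holds iff for every binding $x:^{\pi}\tau$ in $\Gamma$: if $\tau\in\{\mathrm{int},\mathrm{bool},\mathrm{float}\}$ or $\tau=\beta[]^{\mathrm{Local}}$ then $\eta$ maps $x\mapsto^{\pi}v$ with $\eta,\sigma,\Sigma\vdash v:\tau$; if $\tau=\beta[]^{\mathrm{Shared}}$ then $\sigma$ maps $x\mapsto^{\pi}v$ with $v$ well-typed at $\tau$; if $\tau=\beta[]^{\mathrm{Global}}$ or $\tau$ is a function type then $\Sigma$ maps $x\mapsto^{\pi}v$ with $v$ well-typed at $\tau$; and no binding has a type of the form $\mathrm{async}\ \tau$. Evaluation $\eta,\sigma,\Sigma\vdash^{\pi}_{\pi'}e\Downarrow v$ ($\pi$ the ambient perspective, $\pi'$ the target perspective)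 is the least relation with: (E-Partition-Id) if $\pi<(\mathrm{Grid},1)$ and $\pi'\le\pi$ then $\mathrm{partition\_id}\Downarrow \pi/\pi'-1$; (E-Var) $x\Downarrow\mathrm{get}(\eta,\sigma,\Sigma,x)$; (E-Arr-Access) if $e_1\Downarrow\langle l,n\rangle$, $e_2\Downarrow i$, $i<n$ and $\pi'\le\pi$ then $e_1[e_2]\Downarrow\mathrm{get}(\eta,\sigma,\Sigma,l+i)$; integer, float and boolean literals evaluate to themselves; (E-Bop/E-Cmp) if $e_1\Downarrow v_1$ and $e_2\Downarrow v_2$ then $e_1\ \mathrm{bop}\ e_2\Downarrow v_1\ \mathrm{bop}\ v_2$ and $e_1\ \mathrm{cmp}\ e_2\Downarrow v_1\ \mathrm{cmp}\ v_2$ (all subevaluations at the same $\pi,\pi'$). *)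

theory Defs
  imports Complex_Main
begin

datatype level = Thread | Block | Grid

fun level_rank :: "level \<Rightarrow> nat" where
  "level_rank Thread = 0" | "level_rank Block = 1" | "level_rank Grid = 2"

definition level_le :: "level \<Rightarrow> level \<Rightarrow> bool" where
  "level_le h1 h2 \<longleftrightarrow> level_rank h1 \<le> level_rank h2"

datatype memkind = Local | Shared | Global

type_synonym persp = "level \<times> nat"

definition persp_le :: "persp \<Rightarrow> persp \<Rightarrow> bool" where
  "persp_le p1 p2 \<longleftrightarrow> snd p1 dvd snd p2 \<and> level_le (fst p1) (fst p2)"

definition persp_less :: "persp \<Rightarrow> persp \<Rightarrow> bool" where
  "persp_less p1 p2 \<longleftrightarrow> persp_le p1 p2 \<and> p1 \<noteq> p2"

text \<open>Level ratios h1/h2 (only meaningful for h2 \<le> h1; other cases are set to 0).\<close>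
fun level_ratio :: "nat \<Rightarrow> nat \<Rightarrow> level \<Rightarrow> level \<Rightarrow> nat" where
  "level_ratio T B Grid Grid = 1"
| "level_ratio T B Block Block = 1"
| "level_ratio T B Thread Thread = 1"
| "level_ratio T B Grid Block = B"
| "level_ratio T B Block Thread = T"
| "level_ratio T B Grid Thread = B * T"
| "level_ratio T B _ _ = 0"

definition persp_div :: "nat \<Rightarrow> nat \<Rightarrow> persp \<Rightarrow> persp \<Rightarrow> nat" where
  "persp_div T B p1 p2 = (level_ratio T B (fst p1) (fst p2) * snd p1) div snd p2"

definition persp_vdash :: "persp \<Rightarrow> nat \<Rightarrow> bool" where
  "persp_vdash \<pi> p \<longleftrightarrow> p < snd \<pi>"

datatype base = BBool | BInt | BFloat

type_synonym name = int

datatype ty = TBase base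
  | TArr base memkind
  | TFun "(name \<times> persp \<times> ty) list" persp nat
  | TAsync ty

type_synonym ctx = "(name \<times> persp \<times> ty) list"

datatype expr = Var name
  | IntLit int
  | FloatLit real
  | BoolLit bool
  | PartId
  | Idx expr expr
  | Bop "int \<Rightarrow> int \<Rightarrow> int" expr expr
  | Cmp "int \<Rightarrow> int \<Rightarrow> bool" expr expr

fun subexprs :: "expr \<Rightarrow> expr set" where
  "subexprs (Idx e1 e2) = insert (Idx e1 e2) (subexprs e1 \<union> subexprs e2)"
| "subexprs (Bop f e1 e2) = insert (Bop f e1 e2) (subexprs e1 \<union> subexprs e2)"
| "subexprs (Cmp f e1 e2) = insert (Cmp f e1 e2) (subexprs e1 \<union> subexprs e2)"
| "subexprs e = {e}"

inductive has_type :: "ctx \<Rightarrow> persp \<Rightarrow> expr \<Rightarrow> ty \<Rightarrow> bool" where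
  T_Var: "(x, \<pi>, \<tau>) \<in> set \<Gamma> \<Longrightarrow> has_type \<Gamma> \<pi> (Var x) \<tau>"
| T_Int: "has_type \<Gamma> \<pi> (IntLit n) (TBase BInt)"
| T_Float: "has_type \<Gamma> \<pi> (FloatLit f) (TBase BFloat)"
| T_Bool: "has_type \<Gamma> \<pi> (BoolLit b) (TBase BBool)"
| T_PartId: "persp_less \<pi> (Grid, 1) \<Longrightarrow> has_type \<Gamma> \<pi> PartId (TBase BInt)"
| T_ArrAccess: "\<lbrakk> has_type \<Gamma> \<pi>'' e1 (TArr \<beta> l); has_type \<Gamma> \<pi> e2 (TBase BInt);
     l \<in> {Global, Local}; persp_le \<pi> \<pi>'' \<rbrakk> \<Longrightarrow> has_type \<Gamma> \<pi> (Idx e1 e2) (TBase \<beta>)"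
| T_ArrAccessShared: "\<lbrakk> has_type \<Gamma> \<pi>'' e1 (TArr \<beta> Shared); has_type \<Gamma> \<pi> e2 (TBase BInt);
     persp_le \<pi> (Block, 1); persp_le \<pi> \<pi>'' \<rbrakk> \<Longrightarrow> has_type \<Gamma> \<pi> (Idx e1 e2) (TBase \<beta>)"
| T_Bop: "\<lbrakk> has_type \<Gamma> \<pi> e1 (TBase BInt); has_type \<Gamma> \<pi> e2 (TBase BInt) \<rbrakk>
     \<Longrightarrow> has_type \<Gamma> \<pi> (Bop f e1 e2) (TBase BInt)"
| T_Cmp: "\<lbrakk> has_type \<Gamma> \<pi> e1 (TBase BInt); has_type \<Gamma> \<pi> e2 (TBase BInt) \<rbrakk>
     \<Longrightarrow> has_type \<Gamma> \<pi> (Cmp f e1 e2) (TBase BBool)"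

text \<open>Closures are kept abstract (type parameter 'c).\<close>
datatype 'c val = VInt int | VFloat real | VBool bool | VArr name nat | VClos 'c

type_synonym 'c mem = "name \<Rightarrow> (persp \<times> 'c val) option"

definition get :: "'c mem \<Rightarrow> 'c mem \<Rightarrow> 'c mem \<Rightarrow> name \<Rightarrow> 'c val option" where
  "get \<eta> \<sigma> \<Sigma> x =
     (case \<eta> x of Some (_, v) \<Rightarrow> Some v
      | None \<Rightarrow> (case \<sigma> x of Some (_, v) \<Rightarrow> Some v
      | None \<Rightarrow> (case \<Sigma> x of Some (_, v) \<Rightarrow> Some v | None \<Rightarrow> None)))"

definition mems_disjoint :: "'c mem \<Rightarrow> 'c mem \<Rightarrow> 'c mem \<Rightarrow> bool" where
  "mems_disjoint \<eta> \<sigma> \<Sigma> \<longleftrightarrow>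
     dom \<eta> \<inter> dom \<sigma> = {} \<and> dom \<eta> \<inter> dom \<Sigma> = {} \<and> dom \<sigma> \<inter> dom \<Sigma> = {}"

fun base_val_typ :: "'c val \<Rightarrow> base \<Rightarrow> bool" where
  "base_val_typ (VInt _) BInt = True"
| "base_val_typ (VBool _) BBool = True"
| "base_val_typ (VFloat _) BFloat = True"
| "base_val_typ _ _ = False"

text \<open>Value typing; the closure typing relation ct is a fixed given parameter.\<close>
fun val_typ :: "('c mem \<Rightarrow> 'c mem \<Rightarrow> 'c mem \<Rightarrow> 'c \<Rightarrow> ty \<Rightarrow> bool)
    \<Rightarrow> 'c mem \<Rightarrow> 'c mem \<Rightarrow> 'c mem \<Rightarrow> 'c val \<Rightarrow> ty \<Rightarrow> bool" where
  "val_typ ct \<eta> \<sigma> \<Sigma> (VArr x n) (TArr \<beta> l) =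
     (\<forall>i<n. \<exists>w. get \<eta> \<sigma> \<Sigma> (x + int i) = Some w \<and> base_val_typ w \<beta>)"
| "val_typ ct \<eta> \<sigma> \<Sigma> (VClos c) (TFun G p m) = ct \<eta> \<sigma> \<Sigma> c (TFun G p m)"
| "val_typ ct \<eta> \<sigma> \<Sigma> v (TBase \<beta>) = base_val_typ v \<beta>"
| "val_typ ct \<eta> \<sigma> \<Sigma> _ _ = False"

definition binding_ok :: "('c mem \<Rightarrow> 'c mem \<Rightarrow> 'c mem \<Rightarrow> 'c \<Rightarrow> ty \<Rightarrow> bool)
    \<Rightarrow> 'c mem \<Rightarrow> 'c mem \<Rightarrow> 'c mem \<Rightarrow> name \<Rightarrow> persp \<Rightarrow> ty \<Rightarrow> bool" where
  "binding_ok ct \<eta> \<sigma> \<Sigma> x \<pi> \<tau> =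
     (case \<tau> of
        TBase _ \<Rightarrow> \<exists>v. \<eta> x = Some (\<pi>, v) \<and> val_typ ct \<eta> \<sigma> \<Sigma> v \<tau>
      | TArr _ Local \<Rightarrow> \<exists>v. \<eta> x = Some (\<pi>, v) \<and> val_typ ct \<eta> \<sigma> \<Sigma> v \<tau>
      | TArr _ Shared \<Rightarrow> \<exists>v. \<sigma> x = Some (\<pi>, v) \<and> val_typ ct \<eta> \<sigma> \<Sigma> v \<tau>
      | TArr _ Global \<Rightarrow> \<exists>v. \<Sigma> x = Some (\<pi>, v) \<and> val_typ ct \<eta> \<sigma> \<Sigma> v \<tau>
      | TFun _ _ _ \<Rightarrow> \<exists>v. \<Sigma> x = Some (\<pi>, v) \<and> val_typ ct \<eta> \<sigma> \<Sigma> v \<tau>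
      | TAsync _ \<Rightarrow> False)"

definition env_typ :: "('c mem \<Rightarrow> 'c mem \<Rightarrow> 'c mem \<Rightarrow> 'c \<Rightarrow> ty \<Rightarrow> bool)
    \<Rightarrow> ctx \<Rightarrow> 'c mem \<Rightarrow> 'c mem \<Rightarrow> 'c mem \<Rightarrow> bool" where
  "env_typ ct \<Gamma> \<eta> \<sigma> \<Sigma> \<longleftrightarrow> (\<forall>(x, \<pi>, \<tau>) \<in> set \<Gamma>. binding_ok ct \<eta> \<sigma> \<Sigma> x \<pi> \<tau>)"

inductive eval :: "nat \<Rightarrow> nat \<Rightarrow> 'c mem \<Rightarrow> 'c mem \<Rightarrow> 'c mem \<Rightarrow> persp \<Rightarrow> persp \<Rightarrow> expr \<Rightarrow> 'c val \<Rightarrow> bool"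
  for T B \<eta> \<sigma> \<Sigma> \<pi> \<pi>' where
  E_PartId: "\<lbrakk> persp_less \<pi> (Grid, 1); persp_le \<pi>' \<pi> \<rbrakk>
     \<Longrightarrow> eval T B \<eta> \<sigma> \<Sigma> \<pi> \<pi>' PartId (VInt (int (persp_div T B \<pi> \<pi>') - 1))"
| E_Var: "get \<eta> \<sigma> \<Sigma> x = Some v \<Longrightarrow> eval T B \<eta> \<sigma> \<Sigma> \<pi> \<pi>' (Var x) v"
| E_ArrAccess: "\<lbrakk> eval T B \<eta> \<sigma> \<Sigma> \<pi> \<pi>' e1 (VArr l n); eval T B \<eta> \<sigma> \<Sigma> \<pi> \<pi>' e2 (VInt i);
     i < int n; persp_le \<pi>' \<pi>; get \<eta> \<sigma> \<Sigma> (l + i) = Some v \<rbrakk>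
     \<Longrightarrow> eval T B \<eta> \<sigma> \<Sigma> \<pi> \<pi>' (Idx e1 e2) v"
| E_Int: "eval T B \<eta> \<sigma> \<Sigma> \<pi> \<pi>' (IntLit n) (VInt n)"
| E_Float: "eval T B \<eta> \<sigma> \<Sigma> \<pi> \<pi>' (FloatLit f) (VFloat f)"
| E_Bool: "eval T B \<eta> \<sigma> \<Sigma> \<pi> \<pi>' (BoolLit b) (VBool b)"
| E_Bop: "\<lbrakk> eval T B \<eta> \<sigma> \<Sigma> \<pi> \<pi>' e1 (VInt v1); eval T B \<eta> \<sigma> \<Sigma> \<pi> \<pi>' e2 (VInt v2) \<rbrakk>
     \<Longrightarrow> eval T B \<eta> \<sigma> \<Sigma> \<pi> \<pi>' (Bop f e1 e2) (VInt (f v1 v2))"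
| E_Cmp: "\<lbrakk> eval T B \<eta> \<sigma> \<Sigma> \<pi> \<pi>' e1 (VInt v1); eval T B \<eta> \<sigma> \<Sigma> \<pi> \<pi>' e2 (VInt v2) \<rbrakk>
     \<Longrightarrow> eval T B \<eta> \<sigma> \<Sigma> \<pi> \<pi>' (Cmp f e1 e2) (VBool (f v1 v2))"

end

theory Submission
  imports Defs
begin

lemma get_eta: "\<eta> x = Some (q, v) \<Longrightarrow> get \<eta> \<sigma> \<Sigma> x = Some v"
  by (simp add: get_def)
lemma get_sigma: "\<eta> x = None \<Longrightarrow> \<sigma> x = Some (q, v) \<Longrightarrow> get \<eta> \<sigma> \<Sigma> x = Some v"
  by (simp add: get_def)
lemma get_Sigma: "\<eta> x = None \<Longrightarrow> \<sigma> x = None \<Longrightarrow> \<Sigma> x = Some (q, v) \<Longrightarrow> get \<eta> \<sigma> \<Sigma> x = Some v"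
  by (simp add: get_def)

lemma var_lookup:
  assumes "mems_disjoint \<eta> \<sigma> \<Sigma>" "env_typ ct \<Gamma> \<eta> \<sigma> \<Sigma>" "(x, \<pi>, \<tau>) \<in> set \<Gamma>"
  shows "\<exists>v. get \<eta> \<sigma> \<Sigma> x = Some v \<and> val_typ ct \<eta> \<sigma> \<Sigma> v \<tau>"
proof -
  have b: "binding_ok ct \<eta> \<sigma> \<Sigma> x \<pi> \<tau>" using assms(2,3) unfolding env_typ_def by fastforce
  have d2: "\<sigma> x \<noteq> None \<Longrightarrow> \<eta> x = None"
    and d3: "\<Sigma> x \<noteq> None \<Longrightarrow> \<eta> x = None \<and> \<sigma> x = None"
    using assms(1) unfolding mems_disjoint_def by blast+
  show ?thesis
  proof (cases \<tau>)
    case (TArr b m)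
    then show ?thesis
    proof (cases m)
      case Local
      then obtain v where "\<eta> x = Some (\<pi>, v)" "val_typ ct \<eta> \<sigma> \<Sigma> v \<tau>"
        using b TArr unfolding binding_ok_def by auto
      then show ?thesis by (simp add: get_def)
    next
      case Shared
      then obtain v where "\<sigma> x = Some (\<pi>, v)" "val_typ ct \<eta> \<sigma> \<Sigma> v \<tau>"
        using b TArr unfolding binding_ok_def by auto
      then show ?thesis using d2 by (simp add: get_def)
    next
      case Global
      then obtain v where "\<Sigma> x = Some (\<pi>, v)" "val_typ ct \<eta> \<sigma> \<Sigma> v \<tau>"
        using b TArr unfolding binding_ok_def by auto
      then show ?thesis using d3 by (simp add: get_def)
    qed
  next
    case (TBase x1)
    then obtain v where "\<eta> x = Some (\<pi>, v)" "val_typ ct \<eta> \<sigma> \<Sigma> v \<tau>"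
      using b unfolding binding_ok_def by auto
    then show ?thesis by (simp add: get_def)
  next
    case (TFun x31 x32 x33)
    then obtain v where "\<Sigma> x = Some (\<pi>, v)" "val_typ ct \<eta> \<sigma> \<Sigma> v \<tau>"
      using b unfolding binding_ok_def by auto
    then show ?thesis using d3 by (simp add: get_def)
  next
    case (TAsync x4)
    then show ?thesis using b unfolding binding_ok_def by auto
  qed
qed

inductive_cases tVar: "has_type \<Gamma> \<pi> (Var x) \<tau>"
inductive_cases tPart: "has_type \<Gamma> \<pi> PartId \<tau>"
inductive_cases tIdx: "has_type \<Gamma> \<pi> (Idx e1 e2) \<tau>"
inductive_cases tBop: "has_type \<Gamma> \<pi> (Bop f e1 e2) \<tau>"
inductive_cases tCmp: "has_type \<Gamma> \<pi> (Cmp f e1 e2) \<tau>"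
inductive_cases tInt: "has_type \<Gamma> \<pi> (IntLit n) \<tau>"
inductive_cases tFloat: "has_type \<Gamma> \<pi> (FloatLit n) \<tau>"
inductive_cases tBool: "has_type \<Gamma> \<pi> (BoolLit n) \<tau>"

lemma arr_typed_var:
  "has_type \<Gamma> \<pi> e (TArr \<beta> l) \<Longrightarrow> \<exists>x. e = Var x \<and> (x, \<pi>, TArr \<beta> l) \<in> set \<Gamma>"
  by (erule has_type.cases) auto

lemma safety:
  assumes "mems_disjoint \<eta> \<sigma> \<Sigma>" "env_typ ct \<Gamma> \<eta> \<sigma> \<Sigma>" "persp_le \<pi>' \<pi>"
  shows "has_type \<Gamma> \<pi> e \<tau> \<Longrightarrow> \<forall>e1 e2. Idx e1 e2 \<in> subexprs e \<longrightarrow>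
           (\<forall>l n i. eval T B \<eta> \<sigma> \<Sigma> \<pi> \<pi>' e1 (VArr l n) \<longrightarrow>
                    eval T B \<eta> \<sigma> \<Sigma> \<pi> \<pi>' e2 (VInt i) \<longrightarrow> 0 \<le> i \<and> i < int n)
   \<Longrightarrow> \<exists>v. eval T B \<eta> \<sigma> \<Sigma> \<pi> \<pi>' e v \<and> val_typ ct \<eta> \<sigma> \<Sigma> v \<tau>"
proof (induction e arbitrary: \<tau>)
  case (Var x)
  then have "(x, \<pi>, \<tau>) \<in> set \<Gamma>" by (auto elim: tVar)
  then obtain v where "get \<eta> \<sigma> \<Sigma> x = Some v" "val_typ ct \<eta> \<sigma> \<Sigma> v \<tau>"
    using var_lookup[OF assms(1,2)] by blast
  then show ?case by (auto intro: eval.intros)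
next
  case PartId
  then show ?case using assms(3) by (auto elim!: tPart intro!: exI[of _ "VInt (int (persp_div T B \<pi> \<pi>') - 1)"] eval.E_PartId)
next
  case (Idx e1 e2)
  from Idx.prems(1) obtain \<pi>'' \<beta> l where t1: "has_type \<Gamma> \<pi>'' e1 (TArr \<beta> l)"
    and t2: "has_type \<Gamma> \<pi> e2 (TBase BInt)" and tau: "\<tau> = TBase \<beta>"
    by (auto elim!: tIdx)
  from arr_typed_var[OF t1] obtain x where x: "e1 = Var x" "(x, \<pi>'', TArr \<beta> l) \<in> set \<Gamma>" by blast
  from var_lookup[OF assms(1,2) x(2)] obtain v where v: "get \<eta> \<sigma> \<Sigma> x = Some v"
    "val_typ ct \<eta> \<sigma> \<Sigma> v (TArr \<beta> l)" by blast
  then obtain y n where vy: "v = VArr y n" by (cases v) auto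
  have ev1: "eval T B \<eta> \<sigma> \<Sigma> \<pi> \<pi>' e1 (VArr y n)" using x v vy by (auto intro: eval.intros)
  from Idx.IH(2)[OF t2] Idx.prems(2) obtain w where w: "eval T B \<eta> \<sigma> \<Sigma> \<pi> \<pi>' e2 w"
    "val_typ ct \<eta> \<sigma> \<Sigma> w (TBase BInt)" by auto
  then obtain i where wi: "w = VInt i" by (cases w) auto
  have bnd: "0 \<le> i" "i < int n" using Idx.prems(2) ev1 w wi by auto
  then obtain k where k: "i = int k" "k < n" by (metis nat_0_le nat_less_iff)
  from v vy k obtain u where u: "get \<eta> \<sigma> \<Sigma> (y + i) = Some u" "base_val_typ u \<beta>" by auto
  have "eval T B \<eta> \<sigma> \<Sigma> \<pi> \<pi>' (Idx e1 e2) u"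
    using ev1 w wi bnd assms(3) u by (auto intro: eval.intros)
  then show ?case using tau u by auto
next
  case (Bop f e1 e2)
  from Bop.prems(1) have t: "has_type \<Gamma> \<pi> e1 (TBase BInt)" "has_type \<Gamma> \<pi> e2 (TBase BInt)"
    "\<tau> = TBase BInt" by (auto elim!: tBop)
  from Bop.IH(1)[OF t(1)] Bop.prems(2) obtain a where a: "eval T B \<eta> \<sigma> \<Sigma> \<pi> \<pi>' e1 a"
    "val_typ ct \<eta> \<sigma> \<Sigma> a (TBase BInt)" by auto
  from Bop.IH(2)[OF t(2)] Bop.prems(2) obtain b where b: "eval T B \<eta> \<sigma> \<Sigma> \<pi> \<pi>' e2 b"
    "val_typ ct \<eta> \<sigma> \<Sigma> b (TBase BInt)" by auto
  obtain i j where "a = VInt i" "b = VInt j" using a b by (cases a; cases b) auto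
  then show ?case using a b t by (auto intro: eval.intros)
next
  case (Cmp f e1 e2)
  from Cmp.prems(1) have t: "has_type \<Gamma> \<pi> e1 (TBase BInt)" "has_type \<Gamma> \<pi> e2 (TBase BInt)"
    "\<tau> = TBase BBool" by (auto elim!: tCmp)
  from Cmp.IH(1)[OF t(1)] Cmp.prems(2) obtain a where a: "eval T B \<eta> \<sigma> \<Sigma> \<pi> \<pi>' e1 a"
    "val_typ ct \<eta> \<sigma> \<Sigma> a (TBase BInt)" by auto
  from Cmp.IH(2)[OF t(2)] Cmp.prems(2) obtain b where b: "eval T B \<eta> \<sigma> \<Sigma> \<pi> \<pi>' e2 b"
    "val_typ ct \<eta> \<sigma> \<Sigma> b (TBase BInt)" by auto
  obtain i j where "a = VInt i" "b = VInt j" using a b by (cases a; cases b) auto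
  then show ?case using a b t by (auto intro: eval.intros)
qed (auto elim!: tInt tFloat tBool intro: eval.intros)

theorem lemmaA4:
  fixes T B :: nat
    and ct :: "'c mem \<Rightarrow> 'c mem \<Rightarrow> 'c mem \<Rightarrow> 'c \<Rightarrow> ty \<Rightarrow> bool"
    and \<Gamma> :: ctx and e :: expr and \<tau> :: ty and \<pi> \<pi>' :: persp and p :: nat
    and \<eta> \<sigma> \<Sigma> :: "'c mem"
  assumes "0 < T" and "0 < B"
    and "mems_disjoint \<eta> \<sigma> \<Sigma>"
    and "has_type \<Gamma> \<pi> e \<tau>"
    and "env_typ ct \<Gamma> \<eta> \<sigma> \<Sigma>"
    and "persp_vdash \<pi> p"
    and "persp_le \<pi>' \<pi>"
    and "\<forall>e1 e2. Idx e1 e2 \<in> subexprs e \<longrightarrow>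
           (\<forall>l n i. eval T B \<eta> \<sigma> \<Sigma> \<pi> \<pi>' e1 (VArr l n) \<longrightarrow>
                    eval T B \<eta> \<sigma> \<Sigma> \<pi> \<pi>' e2 (VInt i) \<longrightarrow> 0 \<le> i \<and> i < int n)"
  shows "\<exists>v. eval T B \<eta> \<sigma> \<Sigma> \<pi> \<pi>' e v \<and> val_typ ct \<eta> \<sigma> \<Sigma> v \<tau>"
  using safety[OF assms(3,5,7) assms(4,8)] .

end
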